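(* Fix $p\in[0,\infty]$. Let $(R_t)_{t=0}^{T-1}$ be a dynamic monetary risk measure and $(U_t)_{t=0}^{T-1}$ a dynamic monetary utility function (both for this $p$), and let $\eta_t\in L^0(\mathcal{F}_t)$ with $\eta_t>0$ for each $t$. (i) For each $t\in\{0,\dots,T-1\}$, the map $$W_t(Y):=R_t(-Y)-\frac{1}{1+\eta_t}U_t\big(\big(R_t(-Y)-Y\big)_+\big)$$ is a mapping from $L^p(\mathcal{F}_{t+1})$ to $L^p(\mathcal{F}_t)$ with the properties: if $\lambda\in L^p(\mathcal{F}_t)$ and $Y\in L^p(\mathcal{F}_{t+1})$ then $W_t(Y+\lambda)=W_t(Y)+\lambda$; if $Y,\widetilde Y\in L^p(\mathcal{F}_{t+1})$ and $Y\le \widetilde Y$ then $W_t(Y)\le W_t(\widetilde Y)$; if $c\in L^p_+(\mathcal{F}_t)$ and $Y\in L^p(\mathcal{F}_{t+1})$ then $W_t(cY)=cW_t(Y)$. (ii) Let $(X_t)_{t=1}^T$ be an $\mathbb{F}$-adapted cash flow with $X_t\in L^p(\mathcal{F}_t)$ for every $t$, and define $V_T(X):=0$ and recursively, for $t=T-1,\dots,0$, with $Y_{t+1}:=X_{t+1}+V_{t+1}(X)$, $$V_t(X):=R_t(-Y_{t+1})-\frac{1}{1+\eta_t}U_t\big(\big(R_t(-Y_{t+1})-Y_{t+1}\big)_+\big).$$ Then for every $t\in\{0,\dots,T-1\}$, $$V_t(X)=W_t\circ\dots\circ W_{T-1}(X_{t+1}+\dots+X_T).$$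
   Context: Let $T\ge 1$ be an integer and $(\Omega,\mathcal{F},\mathbb{F},\mathbb{P})$ a filtered probability space with $\mathbb{F}=(\mathcal{F}_t)_{t=0}^T$ and $\{\emptyset,\Omega\}=\mathcal{F}_0\subseteq\dots\subseteq\mathcal{F}_T=\mathcal{F}$. $L^0(\mathcal{F}_t)$ is the space of real-valued $\mathcal{F}_t$-measurable random variables; for $p\in(0,\infty)$, $L^p(\mathcal{F}_t)=\{Y\in L^0(\mathcal{F}_t):\mathbb{E}|Y|^p<\infty\}$; $L^\infty(\mathcal{F}_t)$ is the space of essentially bounded $\mathcal{F}_t$-measurable random variables; $L^p_+(\mathcal{F}_t)$ denotes the nonnegative elements of $L^p(\mathcal{F}_t)$. Random variables equal a.s. are identified and all (in)equalities are understood $\mathbb{P}$-a.s. $x_+=\max(x,0)$. For $p\in[0,\infty]$, a dynamic monetary risk measure is a sequence of maps $R_t:L^p(\mathcal{F}_{t+1})\to L^p(\mathcal{F}_t)$, $t=0,\dots,T-1$, such that $R_t(Y+\lambda)=R_t(Y)-\lambda$ for $\lambda\in L^p(\mathcal{F}_t)$, $Y\in L^p(\mathcal{F}_{t+1})$; $Y\le\widetilde Y$ implies $R_t(Y)\ge R_t(\widetilde Y)$; and $R_t(cY)=cR_t(Y)$ for $c\in L^p_+(\mathcal{F}_t)$. A dynamic monetary utility function is a sequence of maps $U_t:L^p(\mathcal{F}_{t+1})\to L^p(\mathcal{F}_t)$, $t=0,\dots,T-1$, such that $U_t(Y+\lambda)=U_t(Y)+\lambda$ for $\lambda\in L^p(\mathcal{F}_t)$;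 $Y\le\widetilde Y$ implies $U_t(Y)\le U_t(\widetilde Y)$; and $U_t(cY)=cU_t(Y)$ for $c\in L^p_+(\mathcal{F}_t)$. *)

theory Defs
  imports "HOL-Probability.Probability"
begin

definition filtered_prob_space :: "'a measure \<Rightarrow> (nat \<Rightarrow> 'a measure) \<Rightarrow> nat \<Rightarrow> bool" where
  "filtered_prob_space M F T \<longleftrightarrow>
     prob_space M \<and>
     (\<forall>t\<le>T. space (F t) = space M \<and> sets (F t) \<subseteq> sets M) \<and>
     (\<forall>s t. s \<le> t \<longrightarrow> t \<le> T \<longrightarrow> sets (F s) \<subseteq> sets (F t)) \<and>
     sets (F 0) = {{}, space M} \<and>
     sets (F T) = sets M"

text \<open>L^p(N) for a sub-sigma-algebra N of M, p in [0,infinity]; elements are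
  represented by N-measurable real functions (a.s. identification is handled by
  stating all (in)equalities almost surely).\<close>
definition Lp :: "'a measure \<Rightarrow> 'a measure \<Rightarrow> ennreal \<Rightarrow> ('a \<Rightarrow> real) set" where
  "Lp M N p = {Y \<in> borel_measurable N.
      (if p = 0 then True
       else if p = \<infinity> then (\<exists>C. AE x in M. \<bar>Y x\<bar> \<le> C)
       else (\<integral>\<^sup>+ x. ennreal (\<bar>Y x\<bar> powr enn2real p) \<partial>M) < \<infinity>)}"

definition Lp_plus :: "'a measure \<Rightarrow> 'a measure \<Rightarrow> ennreal \<Rightarrow> ('a \<Rightarrow> real) set" where
  "Lp_plus M N p = {Y \<in> Lp M N p. AE x in M. 0 \<le> Y x}"

definition dyn_risk_measure ::
  "'a measure \<Rightarrow> (nat \<Rightarrow> 'a measure) \<Rightarrow> ennreal \<Rightarrow> nat \<Rightarrow> (nat \<Rightarrow> ('a \<Rightarrow> real) \<Rightarrow> ('a \<Rightarrow> real)) \<Rightarrow> bool" where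
  "dyn_risk_measure M F p T R \<longleftrightarrow> (\<forall>t<T.
     (\<forall>Y\<in>Lp M (F (Suc t)) p. R t Y \<in> Lp M (F t) p) \<and>
     (\<forall>Y\<in>Lp M (F (Suc t)) p. \<forall>l\<in>Lp M (F t) p.
        AE x in M. R t (\<lambda>\<omega>. Y \<omega> + l \<omega>) x = R t Y x - l x) \<and>
     (\<forall>Y\<in>Lp M (F (Suc t)) p. \<forall>Y'\<in>Lp M (F (Suc t)) p.
        (AE x in M. Y x \<le> Y' x) \<longrightarrow> (AE x in M. R t Y' x \<le> R t Y x)) \<and>
     (\<forall>c\<in>Lp_plus M (F t) p. \<forall>Y\<in>Lp M (F (Suc t)) p.
        (\<lambda>\<omega>. c \<omega> * Y \<omega>) \<in> Lp M (F (Suc t)) p \<longrightarrow>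
        (AE x in M. R t (\<lambda>\<omega>. c \<omega> * Y \<omega>) x = c x * R t Y x)))"

definition dyn_utility ::
  "'a measure \<Rightarrow> (nat \<Rightarrow> 'a measure) \<Rightarrow> ennreal \<Rightarrow> nat \<Rightarrow> (nat \<Rightarrow> ('a \<Rightarrow> real) \<Rightarrow> ('a \<Rightarrow> real)) \<Rightarrow> bool" where
  "dyn_utility M F p T U \<longleftrightarrow> (\<forall>t<T.
     (\<forall>Y\<in>Lp M (F (Suc t)) p. U t Y \<in> Lp M (F t) p) \<and>
     (\<forall>Y\<in>Lp M (F (Suc t)) p. \<forall>l\<in>Lp M (F t) p.
        AE x in M. U t (\<lambda>\<omega>. Y \<omega> + l \<omega>) x = U t Y x + l x) \<and>
     (\<forall>Y\<in>Lp M (F (Suc t)) p. \<forall>Y'\<in>Lp M (F (Suc t)) p.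
        (AE x in M. Y x \<le> Y' x) \<longrightarrow> (AE x in M. U t Y x \<le> U t Y' x)) \<and>
     (\<forall>c\<in>Lp_plus M (F t) p. \<forall>Y\<in>Lp M (F (Suc t)) p.
        (\<lambda>\<omega>. c \<omega> * Y \<omega>) \<in> Lp M (F (Suc t)) p \<longrightarrow>
        (AE x in M. U t (\<lambda>\<omega>. c \<omega> * Y \<omega>) x = c x * U t Y x)))"

definition Wmap ::
  "(nat \<Rightarrow> ('a \<Rightarrow> real) \<Rightarrow> ('a \<Rightarrow> real)) \<Rightarrow> (nat \<Rightarrow> ('a \<Rightarrow> real) \<Rightarrow> ('a \<Rightarrow> real)) \<Rightarrow>
   (nat \<Rightarrow> 'a \<Rightarrow> real) \<Rightarrow> nat \<Rightarrow> ('a \<Rightarrow> real) \<Rightarrow> ('a \<Rightarrow> real)" where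
  "Wmap R U \<eta> t Y = (\<lambda>x. R t (\<lambda>\<omega>. - Y \<omega>) x
      - 1 / (1 + \<eta> t x) * U t (\<lambda>\<omega>. max (R t (\<lambda>\<omega>'. - Y \<omega>') \<omega> - Y \<omega>) 0) x)"

definition Vval ::
  "(nat \<Rightarrow> ('a \<Rightarrow> real) \<Rightarrow> ('a \<Rightarrow> real)) \<Rightarrow> (nat \<Rightarrow> ('a \<Rightarrow> real) \<Rightarrow> ('a \<Rightarrow> real)) \<Rightarrow>
   (nat \<Rightarrow> 'a \<Rightarrow> real) \<Rightarrow> nat \<Rightarrow> (nat \<Rightarrow> 'a \<Rightarrow> real) \<Rightarrow> nat \<Rightarrow> ('a \<Rightarrow> real)" where
  "Vval R U \<eta> T X t = foldr
     (\<lambda>s V. let Y = (\<lambda>\<omega>. X (Suc s) \<omega> + V \<omega>) in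
        (\<lambda>x. R s (\<lambda>\<omega>. - Y \<omega>) x
           - 1 / (1 + \<eta> s x) * U s (\<lambda>\<omega>. max (R s (\<lambda>\<omega>'. - Y \<omega>') \<omega> - Y \<omega>) 0) x))
     [t..<T] (\<lambda>x. 0)"

end

theory Submission imports Defs begin

lemma pow_ineq:
  fixes a b q :: real assumes q: "0 \<le> q"
  shows "\<bar>a+b\<bar> powr q \<le> 2 powr q * (\<bar>a\<bar> powr q + \<bar>b\<bar> powr q)"
proof -
  have gen: "\<bar>a+b\<bar> powr q \<le> 2 powr q * (\<bar>a\<bar> powr q + \<bar>b\<bar> powr q)"
    if "\<bar>b\<bar> \<le> \<bar>a\<bar>" for a b :: real
  proof -
    have "\<bar>a+b\<bar> \<le> 2*\<bar>a\<bar>" using that by linarith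
    hence "\<bar>a+b\<bar> powr q \<le> (2*\<bar>a\<bar>) powr q" by (intro powr_mono2) (auto simp: q)
    also have "\<dots> = 2 powr q * \<bar>a\<bar> powr q" by (simp add: powr_mult)
    also have "\<dots> \<le> 2 powr q * (\<bar>a\<bar> powr q + \<bar>b\<bar> powr q)"
      by (intro mult_left_mono) auto
    finally show ?thesis .
  qed
  show ?thesis
  proof (cases "\<bar>b\<bar> \<le> \<bar>a\<bar>")
    case True then show ?thesis by (rule gen)
  next
    case False then show ?thesis using gen[of a b] gen[of b a] by (simp add: add.commute)
  qed
qed

lemma Lp_dom:
  assumes Y: "Y \<in> borel_measurable N" and Z: "Z \<in> Lp M N p"
    and ae: "AE x in M. \<bar>Y x\<bar> \<le> \<bar>Z x\<bar>"
  shows "Y \<in> Lp M N p"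
proof -
  consider "p = 0" | "p = \<infinity>" | "p \<noteq> 0" "p \<noteq> \<infinity>" by blast
  then show ?thesis
  proof cases
    case 1 then show ?thesis using Y by (simp add: Lp_def)
  next
    case 2
    then obtain C where C: "AE x in M. \<bar>Z x\<bar> \<le> C" using Z by (auto simp: Lp_def)
    have "AE x in M. \<bar>Y x\<bar> \<le> C" using C ae by eventually_elim simp
    then show ?thesis using Y 2 by (auto simp: Lp_def)
  next
    case 3
    let ?q = "enn2real p"
    have "(\<integral>\<^sup>+ x. ennreal (\<bar>Y x\<bar> powr ?q) \<partial>M) \<le> (\<integral>\<^sup>+ x. ennreal (\<bar>Z x\<bar> powr ?q) \<partial>M)"
      by (intro nn_integral_mono_AE, use ae in eventually_elim)
         (auto intro!: ennreal_leI powr_mono2)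
    also have "\<dots> < \<infinity>" using Z 3 by (auto simp: Lp_def)
    finally show ?thesis using Y 3 by (auto simp: Lp_def)
  qed
qed

lemma Lp_add:
  assumes N: "space N = space M" "sets N \<subseteq> sets M"
    and Y: "Y \<in> Lp M N p" and Z: "Z \<in> Lp M N p"
  shows "(\<lambda>x. Y x + Z x) \<in> Lp M N p"
proof -
  have sub: "subalgebra M N" using N by (simp add: subalgebra_def)
  have Ym: "Y \<in> borel_measurable N" and Zm: "Z \<in> borel_measurable N"
    using Y Z by (auto simp: Lp_def)
  have YM: "Y \<in> borel_measurable M" and ZM: "Z \<in> borel_measurable M"
    using measurable_from_subalg[OF sub] Ym Zm by auto
  have meas: "(\<lambda>x. Y x + Z x) \<in> borel_measurable N" using Ym Zm by measurable
  consider "p = 0" | "p = \<infinity>" | "p \<noteq> 0" "p \<noteq> \<infinity>" by blast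
  then show ?thesis
  proof cases
    case 1 then show ?thesis using meas by (simp add: Lp_def)
  next
    case 2
    then obtain C D where C: "AE x in M. \<bar>Y x\<bar> \<le> C" and D: "AE x in M. \<bar>Z x\<bar> \<le> D"
      using Y Z by (auto simp: Lp_def)
    have "AE x in M. \<bar>Y x + Z x\<bar> \<le> C + D" using C D by eventually_elim simp
    then show ?thesis using meas 2 by (auto simp: Lp_def)
  next
    case 3
    let ?q = "enn2real p"
    have "(\<integral>\<^sup>+ x. ennreal (\<bar>Y x + Z x\<bar> powr ?q) \<partial>M) \<le>
          (\<integral>\<^sup>+ x. ennreal (2 powr ?q) * (ennreal (\<bar>Y x\<bar> powr ?q) + ennreal (\<bar>Z x\<bar> powr ?q)) \<partial>M)"
    proof (intro nn_integral_mono)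
      fix x
      have "ennreal (\<bar>Y x + Z x\<bar> powr ?q) \<le> ennreal (2 powr ?q * (\<bar>Y x\<bar> powr ?q + \<bar>Z x\<bar> powr ?q))"
        by (intro ennreal_leI pow_ineq) simp
      also have "\<dots> = ennreal (2 powr ?q) * (ennreal (\<bar>Y x\<bar> powr ?q) + ennreal (\<bar>Z x\<bar> powr ?q))"
        by (simp add: ennreal_mult ennreal_plus)
      finally show "ennreal (\<bar>Y x + Z x\<bar> powr ?q) \<le> ennreal (2 powr ?q) * (ennreal (\<bar>Y x\<bar> powr ?q) + ennreal (\<bar>Z x\<bar> powr ?q))" .
    qed
    also have "\<dots> = ennreal (2 powr ?q) * ((\<integral>\<^sup>+ x. ennreal (\<bar>Y x\<bar> powr ?q) \<partial>M) + (\<integral>\<^sup>+ x. ennreal (\<bar>Z x\<bar> powr ?q) \<partial>M))"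
      using YM ZM by (simp add: nn_integral_cmult nn_integral_add)
    also have "\<dots> < \<infinity>" using Y Z 3 by (auto simp: Lp_def ennreal_mult_less_top)
    finally show ?thesis using meas 3 by (auto simp: Lp_def)
  qed
qed

lemma Lp_sub:
  assumes "space N1 = space N2" "sets N1 \<subseteq> sets N2"
  shows "Lp M N1 p \<subseteq> Lp M N2 p"
  using measurable_from_subalg[of N2 N1] assms by (auto simp: Lp_def subalgebra_def)


lemma Lp_uminus: "Y \<in> Lp M N p \<Longrightarrow> (\<lambda>x. - Y x) \<in> Lp M N p"
  by (rule Lp_dom[of _ _ Y]) (auto simp: Lp_def)

lemma Lp_meas: "Y \<in> Lp M N p \<Longrightarrow> Y \<in> borel_measurable N"
  by (simp add: Lp_def)

lemma Lp_diff:
  assumes "space N = space M" "sets N \<subseteq> sets M" "Y \<in> Lp M N p" "Z \<in> Lp M N p"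
  shows "(\<lambda>x. Y x - Z x) \<in> Lp M N p"
  using Lp_add[OF assms(1,2,3) Lp_uminus[OF assms(4)]] by simp

lemma Lp_max0: "Y \<in> Lp M N p \<Longrightarrow> (\<lambda>x. max (Y x) 0) \<in> Lp M N p"
  by (rule Lp_dom[of _ _ Y]) (auto simp: Lp_def)

lemma max_hom: "0 \<le> (c::real) \<Longrightarrow> max (c*a - c*y) 0 = c * max (a - y) 0"
  by (metis max_mult_distrib_left mult_zero_right right_diff_distrib)

locale setting =
  fixes M :: "'a measure" and F :: "nat \<Rightarrow> 'a measure" and T :: nat and p :: ennreal
    and R U :: "nat \<Rightarrow> ('a \<Rightarrow> real) \<Rightarrow> ('a \<Rightarrow> real)" and \<eta> :: "nat \<Rightarrow> 'a \<Rightarrow> real"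
  assumes filt: "filtered_prob_space M F T"
    and R: "dyn_risk_measure M F p T R"
    and U: "dyn_utility M F p T U"
    and eta_meas: "\<And>t. t < T \<Longrightarrow> \<eta> t \<in> borel_measurable (F t)"
    and eta_pos: "\<And>t. t < T \<Longrightarrow> AE x in M. 0 < \<eta> t x"
begin

lemma spc: "t \<le> T \<Longrightarrow> space (F t) = space M" and sts: "t \<le> T \<Longrightarrow> sets (F t) \<subseteq> sets M"
  using filt by (auto simp: filtered_prob_space_def)

lemma Lp_mono: "s \<le> t \<Longrightarrow> t \<le> T \<Longrightarrow> Lp M (F s) p \<subseteq> Lp M (F t) p"
  apply (rule Lp_sub)
  using filt by (auto simp: filtered_prob_space_def)

lemma Lp_Suc: "t < T \<Longrightarrow> Y \<in> Lp M (F t) p \<Longrightarrow> Y \<in> Lp M (F (Suc t)) p"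
  using Lp_mono[of t "Suc t"] by auto

lemma R_Lp: "t < T \<Longrightarrow> Y \<in> Lp M (F (Suc t)) p \<Longrightarrow> R t Y \<in> Lp M (F t) p"
  and R_trans: "t < T \<Longrightarrow> Y \<in> Lp M (F (Suc t)) p \<Longrightarrow> l \<in> Lp M (F t) p \<Longrightarrow>
        AE x in M. R t (\<lambda>\<omega>. Y \<omega> + l \<omega>) x = R t Y x - l x"
  and R_mono: "t < T \<Longrightarrow> Y \<in> Lp M (F (Suc t)) p \<Longrightarrow> Y' \<in> Lp M (F (Suc t)) p \<Longrightarrow>
        (AE x in M. Y x \<le> Y' x) \<Longrightarrow> (AE x in M. R t Y' x \<le> R t Y x)"
  and R_hom: "t < T \<Longrightarrow> c \<in> Lp_plus M (F t) p \<Longrightarrow> Y \<in> Lp M (F (Suc t)) p \<Longrightarrow>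
        (\<lambda>\<omega>. c \<omega> * Y \<omega>) \<in> Lp M (F (Suc t)) p \<Longrightarrow>
        (AE x in M. R t (\<lambda>\<omega>. c \<omega> * Y \<omega>) x = c x * R t Y x)"
  using R unfolding dyn_risk_measure_def by blast+

lemma U_Lp: "t < T \<Longrightarrow> Y \<in> Lp M (F (Suc t)) p \<Longrightarrow> U t Y \<in> Lp M (F t) p"
  and U_trans: "t < T \<Longrightarrow> Y \<in> Lp M (F (Suc t)) p \<Longrightarrow> l \<in> Lp M (F t) p \<Longrightarrow>
        AE x in M. U t (\<lambda>\<omega>. Y \<omega> + l \<omega>) x = U t Y x + l x"
  and U_mono: "t < T \<Longrightarrow> Y \<in> Lp M (F (Suc t)) p \<Longrightarrow> Y' \<in> Lp M (F (Suc t)) p \<Longrightarrow>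
        (AE x in M. Y x \<le> Y' x) \<Longrightarrow> (AE x in M. U t Y x \<le> U t Y' x)"
  and U_hom: "t < T \<Longrightarrow> c \<in> Lp_plus M (F t) p \<Longrightarrow> Y \<in> Lp M (F (Suc t)) p \<Longrightarrow>
        (\<lambda>\<omega>. c \<omega> * Y \<omega>) \<in> Lp M (F (Suc t)) p \<Longrightarrow>
        (AE x in M. U t (\<lambda>\<omega>. c \<omega> * Y \<omega>) x = c x * U t Y x)"
  using U unfolding dyn_utility_def by blast+

lemma U_cong: assumes "t < T" "Y \<in> Lp M (F (Suc t)) p" "Y' \<in> Lp M (F (Suc t)) p"
    "AE x in M. Y x = Y' x"
  shows "AE x in M. U t Y x = U t Y' x"
proof -
  have "AE x in M. U t Y x \<le> U t Y' x" using assms by (intro U_mono) (auto elim: AE_mp)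
  moreover have "AE x in M. U t Y' x \<le> U t Y x" using assms by (intro U_mono) (auto elim: AE_mp)
  ultimately show ?thesis by eventually_elim simp
qed

definition "RA t Y = R t (\<lambda>\<omega>. - Y \<omega>)"
definition "Zf t Y = (\<lambda>\<omega>. max (RA t Y \<omega> - Y \<omega>) 0)"
definition "k t x = 1 / (1 + \<eta> t x)"

lemma W_eq: "Wmap R U \<eta> t Y = (\<lambda>x. RA t Y x - k t x * U t (Zf t Y) x)"
  by (simp add: Wmap_def RA_def Zf_def k_def)

lemma k_meas: "t < T \<Longrightarrow> k t \<in> borel_measurable (F t)"
  unfolding k_def using eta_meas by measurable

lemma k_bnd: assumes t: "t < T" shows "AE x in M. 0 < k t x \<and> k t x \<le> 1"
  using eta_pos[OF t] by eventually_elim (auto simp: k_def)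

lemma RA_Lp: "t < T \<Longrightarrow> Y \<in> Lp M (F (Suc t)) p \<Longrightarrow> RA t Y \<in> Lp M (F t) p"
  unfolding RA_def by (intro R_Lp Lp_uminus)

lemma Zf_Lp: assumes "t < T" "Y \<in> Lp M (F (Suc t)) p" shows "Zf t Y \<in> Lp M (F (Suc t)) p"
  unfolding Zf_def using assms spc[of "Suc t"] sts[of "Suc t"]
  by (intro Lp_max0 Lp_diff[OF _ _ Lp_Suc[OF _ RA_Lp]]) auto

lemma W_Lp: assumes t: "t < T" and Y: "Y \<in> Lp M (F (Suc t)) p"
  shows "Wmap R U \<eta> t Y \<in> Lp M (F t) p"
proof -
  have UL: "U t (Zf t Y) \<in> Lp M (F t) p" using U_Lp[OF t Zf_Lp[OF t Y]] .
  have "(\<lambda>x. k t x * U t (Zf t Y) x) \<in> Lp M (F t) p"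
  proof (rule Lp_dom[OF _ UL])
    show "(\<lambda>x. k t x * U t (Zf t Y) x) \<in> borel_measurable (F t)"
      using k_meas[OF t] Lp_meas[OF UL] by measurable
    show "AE x in M. \<bar>k t x * U t (Zf t Y) x\<bar> \<le> \<bar>U t (Zf t Y) x\<bar>"
      using k_bnd[OF t] by eventually_elim (auto simp: abs_mult intro: mult_left_le_one_le)
  qed
  then show ?thesis unfolding W_eq using t spc[of t] sts[of t]
    by (intro Lp_diff RA_Lp Y) auto
qed


lemma Lsum: "t \<le> T \<Longrightarrow> Y \<in> Lp M (F t) p \<Longrightarrow> Z \<in> Lp M (F t) p \<Longrightarrow> (\<lambda>x. Y x + Z x) \<in> Lp M (F t) p"
  using spc sts by (intro Lp_add) auto
lemma Ldiff: "t \<le> T \<Longrightarrow> Y \<in> Lp M (F t) p \<Longrightarrow> Z \<in> Lp M (F t) p \<Longrightarrow> (\<lambda>x. Y x - Z x) \<in> Lp M (F t) p"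
  using spc sts by (intro Lp_diff) auto

lemma W_trans: assumes t: "t < T" and Y: "Y \<in> Lp M (F (Suc t)) p" and l: "l \<in> Lp M (F t) p"
  shows "AE x in M. Wmap R U \<eta> t (\<lambda>\<omega>. Y \<omega> + l \<omega>) x = Wmap R U \<eta> t Y x + l x"
proof -
  have Yl: "(\<lambda>\<omega>. Y \<omega> + l \<omega>) \<in> Lp M (F (Suc t)) p" using t Y Lp_Suc[OF t l] by (intro Lsum) auto
  have e: "(\<lambda>\<omega>. - (Y \<omega> + l \<omega>)) = (\<lambda>\<omega>. (- Y \<omega>) + (- l \<omega>))" by auto
  have A: "AE x in M. RA t (\<lambda>\<omega>. Y \<omega> + l \<omega>) x = RA t Y x + l x"
    unfolding RA_def e using R_trans[OF t Lp_uminus[OF Y] Lp_uminus[OF l]] by simp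
  have Z: "AE x in M. Zf t (\<lambda>\<omega>. Y \<omega> + l \<omega>) x = Zf t Y x"
    using A by eventually_elim (simp add: Zf_def)
  have UZ: "AE x in M. U t (Zf t (\<lambda>\<omega>. Y \<omega> + l \<omega>)) x = U t (Zf t Y) x"
    by (rule U_cong[OF t Zf_Lp[OF t Yl] Zf_Lp[OF t Y] Z])
  show ?thesis using A UZ unfolding W_eq by eventually_elim simp
qed

lemma W_mono: assumes t: "t < T" and Y: "Y \<in> Lp M (F (Suc t)) p" and Y': "Y' \<in> Lp M (F (Suc t)) p"
    and le: "AE x in M. Y x \<le> Y' x"
  shows "AE x in M. Wmap R U \<eta> t Y x \<le> Wmap R U \<eta> t Y' x"
proof -
  have ale: "AE x in M. RA t Y x \<le> RA t Y' x"
    unfolding RA_def using le by (intro R_mono[OF t Lp_uminus[OF Y'] Lp_uminus[OF Y]]) (auto elim: AE_mp)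
  define d where "d = (\<lambda>x. RA t Y' x - RA t Y x)"
  have d: "d \<in> Lp M (F t) p" unfolding d_def using t by (intro Ldiff RA_Lp Y Y') auto
  define G where "G = (\<lambda>x. Zf t Y x + d x)"
  have G: "G \<in> Lp M (F (Suc t)) p" unfolding G_def using t by (intro Lsum Zf_Lp Y Lp_Suc d) auto
  have "AE x in M. Zf t Y' x \<le> G x"
    using ale le by eventually_elim (auto simp: Zf_def G_def d_def)
  hence U1: "AE x in M. U t (Zf t Y') x \<le> U t G x" by (intro U_mono[OF t Zf_Lp[OF t Y'] G])
  have U2: "AE x in M. U t G x = U t (Zf t Y) x + d x"
    unfolding G_def by (rule U_trans[OF t Zf_Lp[OF t Y] d])
  show ?thesis unfolding W_eq using U1 U2 ale k_bnd[OF t]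
  proof eventually_elim
    case (elim x)
    let ?k = "k t x" and ?a = "U t (Zf t Y') x" and ?b = "U t (Zf t Y) x"
    have h1: "?k * ?a \<le> ?k * (?b + d x)" using elim by (intro mult_left_mono) auto
    have h2: "?k * d x \<le> d x" using elim by (intro mult_left_le_one_le) (auto simp: d_def)
    have h3: "?k * (?b + d x) = ?k * ?b + ?k * d x" by (simp add: distrib_left)
    have h4: "d x = RA t Y' x - RA t Y x" by (simp add: d_def)
    have "RA t Y x - ?k * ?b \<le> RA t Y' x - ?k * ?a" using h1 h2 h3 h4 by linarith
    then show ?case by simp
  qed
qed

lemma W_cong: assumes "t < T" "Y \<in> Lp M (F (Suc t)) p" "Y' \<in> Lp M (F (Suc t)) p"
    "AE x in M. Y x = Y' x"
  shows "AE x in M. Wmap R U \<eta> t Y x = Wmap R U \<eta> t Y' x"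
proof -
  have "AE x in M. Wmap R U \<eta> t Y x \<le> Wmap R U \<eta> t Y' x" using assms by (intro W_mono) (auto elim: AE_mp)
  moreover have "AE x in M. Wmap R U \<eta> t Y' x \<le> Wmap R U \<eta> t Y x" using assms by (intro W_mono) (auto elim: AE_mp)
  ultimately show ?thesis by eventually_elim simp
qed

lemma W_hom: assumes t: "t < T" and c: "c \<in> Lp_plus M (F t) p" and Y: "Y \<in> Lp M (F (Suc t)) p"
    and cY: "(\<lambda>\<omega>. c \<omega> * Y \<omega>) \<in> Lp M (F (Suc t)) p"
  shows "AE x in M. Wmap R U \<eta> t (\<lambda>\<omega>. c \<omega> * Y \<omega>) x = c x * Wmap R U \<eta> t Y x"
proof -
  have cL: "c \<in> Lp M (F t) p" and c0: "AE x in M. 0 \<le> c x" using c by (auto simp: Lp_plus_def)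
  have e: "(\<lambda>\<omega>. - (c \<omega> * Y \<omega>)) = (\<lambda>\<omega>. c \<omega> * (- Y \<omega>))" by (rule ext) simp
  have cmY: "(\<lambda>\<omega>. c \<omega> * (- Y \<omega>)) \<in> Lp M (F (Suc t)) p" using Lp_uminus[OF cY] by (simp only: e)
  have A: "AE x in M. RA t (\<lambda>\<omega>. c \<omega> * Y \<omega>) x = c x * RA t Y x"
    unfolding RA_def e by (rule R_hom[OF t c Lp_uminus[OF Y] cmY])
  have Z: "AE x in M. Zf t (\<lambda>\<omega>. c \<omega> * Y \<omega>) x = c x * Zf t Y x"
    using A c0 by eventually_elim (simp add: Zf_def max_hom)
  have cZ: "(\<lambda>x. c x * Zf t Y x) \<in> Lp M (F (Suc t)) p"
  proof (rule Lp_dom[OF _ Zf_Lp[OF t cY]])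
    have "c \<in> borel_measurable (F (Suc t))" using Lp_meas[OF Lp_Suc[OF t cL]] .
    then show "(\<lambda>x. c x * Zf t Y x) \<in> borel_measurable (F (Suc t))"
      using Lp_meas[OF Zf_Lp[OF t Y]] by measurable
    show "AE x in M. \<bar>c x * Zf t Y x\<bar> \<le> \<bar>Zf t (\<lambda>\<omega>. c \<omega> * Y \<omega>) x\<bar>"
      using Z by eventually_elim simp
  qed
  have UZ: "AE x in M. U t (Zf t (\<lambda>\<omega>. c \<omega> * Y \<omega>)) x = U t (\<lambda>x. c x * Zf t Y x) x"
    by (rule U_cong[OF t Zf_Lp[OF t cY] cZ Z])
  have UH: "AE x in M. U t (\<lambda>x. c x * Zf t Y x) x = c x * U t (Zf t Y) x"
    by (rule U_hom[OF t c Zf_Lp[OF t Y] cZ])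
  show ?thesis unfolding W_eq using A UZ UH by eventually_elim (simp add: algebra_simps)
qed


definition "G t Z = foldr (Wmap R U \<eta>) [t..<T] Z"

lemma G_step: "t < T \<Longrightarrow> G t Z = Wmap R U \<eta> t (G (Suc t) Z)"
  by (simp add: G_def upt_conv_Cons)

lemma G_T: "G T Z = Z" by (simp add: G_def)

lemma G_Lp: assumes "t \<le> T" "Z \<in> Lp M (F T) p" shows "G t Z \<in> Lp M (F t) p"
  using assms(1)
proof (induction rule: inc_induct)
  case base then show ?case using assms(2) by (simp add: G_T)
next
  case (step n) then show ?case by (simp add: G_step W_Lp)
qed

lemma G_trans: assumes "t \<le> T" "Z \<in> Lp M (F T) p"
  shows "\<forall>l\<in>Lp M (F t) p. AE x in M. G t (\<lambda>\<omega>. Z \<omega> + l \<omega>) x = G t Z x + l x"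
  using assms(1)
proof (induction rule: inc_induct)
  case base then show ?case by (simp add: G_T)
next
  case (step n)
  show ?case
  proof
    fix l assume l: "l \<in> Lp M (F n) p"
    have l': "l \<in> Lp M (F (Suc n)) p" using Lp_Suc[OF step(2) l] .
    have lT: "l \<in> Lp M (F T) p" using Lp_mono[of n T] step(2) l by auto
    have IH: "AE x in M. G (Suc n) (\<lambda>\<omega>. Z \<omega> + l \<omega>) x = G (Suc n) Z x + l x"
      using step(3) l' by blast
    have ZL: "(\<lambda>\<omega>. Z \<omega> + l \<omega>) \<in> Lp M (F T) p" using assms(2) lT by (intro Lsum) auto
    have G1: "G (Suc n) (\<lambda>\<omega>. Z \<omega> + l \<omega>) \<in> Lp M (F (Suc n)) p"
      using G_Lp[OF _ ZL, of "Suc n"] step(2) by simp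
    have G2: "G (Suc n) Z \<in> Lp M (F (Suc n)) p" using G_Lp[OF _ assms(2), of "Suc n"] step(2) by simp
    have G3: "(\<lambda>\<omega>. G (Suc n) Z \<omega> + l \<omega>) \<in> Lp M (F (Suc n)) p"
      using step(2) G2 l' by (intro Lsum) auto
    have A: "AE x in M. G n (\<lambda>\<omega>. Z \<omega> + l \<omega>) x = Wmap R U \<eta> n (\<lambda>\<omega>. G (Suc n) Z \<omega> + l \<omega>) x"
      unfolding G_step[OF step(2)] by (rule W_cong[OF step(2) G1 G3 IH])
    have B: "AE x in M. Wmap R U \<eta> n (\<lambda>\<omega>. G (Suc n) Z \<omega> + l \<omega>) x = G n Z x + l x"
      unfolding G_step[OF step(2)] by (rule W_trans[OF step(2) G2 l])
    show "AE x in M. G n (\<lambda>\<omega>. Z \<omega> + l \<omega>) x = G n Z x + l x"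
      using A B by eventually_elim simp
  qed
qed

lemma zero_Lp: "(\<lambda>x. 0) \<in> Lp M N p"
  by (auto simp: Lp_def)

lemma partii:
  assumes HX: "\<forall>s\<in>{1..T}. X s \<in> Lp M (F s) p" and t: "t \<le> T"
  shows "Vval R U \<eta> T X t \<in> Lp M (F t) p \<and>
     (AE x in M. Vval R U \<eta> T X t x = G t (\<lambda>\<omega>. \<Sum>s\<in>{Suc t..T}. X s \<omega>) x)"
proof -
  define V where "V t = Vval R U \<eta> T X t" for t
  define S where "S t = (\<lambda>\<omega>. \<Sum>s\<in>{Suc t..T}. X s \<omega>)" for t
  have V_step: "V n = Wmap R U \<eta> n (\<lambda>\<omega>. X (Suc n) \<omega> + V (Suc n) \<omega>)" if "n < T" for n
    using that by (simp add: V_def Vval_def upt_conv_Cons Wmap_def Let_def)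
  have V_T: "V T = (\<lambda>x. 0)" by (simp add: V_def Vval_def)
  have S_split: "S n = (\<lambda>\<omega>. S (Suc n) \<omega> + X (Suc n) \<omega>)" if "n < T" for n
    using that by (simp add: S_def sum.atLeast_Suc_atMost add.commute)
  have X_Lp: "X (Suc n) \<in> Lp M (F (Suc n)) p" if "n < T" for n using HX that by auto
  have XT_Lp: "X (Suc n) \<in> Lp M (F T) p" if "n < T" for n
    using Lp_mono[of "Suc n" T] X_Lp[OF that] that by auto
  have S_Lp: "S n \<in> Lp M (F T) p" if "n \<le> T" for n
    using that
  proof (induction rule: inc_induct)
    case base then show ?case by (simp add: S_def zero_Lp)
  next
    case (step n) then show ?case using XT_Lp[of n] by (simp add: S_split[of n] Lsum)
  qed
  have "V t \<in> Lp M (F t) p \<and> (AE x in M. V t x = G t (S t) x)"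
    using t
  proof (induction rule: inc_induct)
    case base then show ?case by (simp add: V_T G_T S_def zero_Lp)
  next
    case (step n)
    have n: "n < T" by fact
    have IH1: "V (Suc n) \<in> Lp M (F (Suc n)) p" and IH2: "AE x in M. V (Suc n) x = G (Suc n) (S (Suc n)) x"
      using step(3) by auto
    have XV: "(\<lambda>\<omega>. X (Suc n) \<omega> + V (Suc n) \<omega>) \<in> Lp M (F (Suc n)) p"
      using n X_Lp[OF n] IH1 by (intro Lsum) auto
    have GS: "G (Suc n) (S n) \<in> Lp M (F (Suc n)) p" using n S_Lp[of n] by (intro G_Lp) auto
    have GT: "AE x in M. G (Suc n) (S n) x = G (Suc n) (S (Suc n)) x + X (Suc n) x"
      using G_trans[of "Suc n" "S (Suc n)"] n S_Lp[of "Suc n"] X_Lp[OF n] S_split[OF n] by auto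
    have E: "AE x in M. X (Suc n) x + V (Suc n) x = G (Suc n) (S n) x"
      using GT IH2 by eventually_elim simp
    have "AE x in M. V n x = G n (S n) x"
      unfolding V_step[OF n] G_step[OF n] by (rule W_cong[OF n XV GS E])
    moreover have "V n \<in> Lp M (F n) p" unfolding V_step[OF n] by (rule W_Lp[OF n XV])
    ultimately show ?case by simp
  qed
  then show ?thesis by (simp add: V_def S_def)
qed

end

theorem proposition1:
  fixes M :: "'a measure" and F :: "nat \<Rightarrow> 'a measure" and T :: nat and p :: ennreal
    and R U :: "nat \<Rightarrow> ('a \<Rightarrow> real) \<Rightarrow> ('a \<Rightarrow> real)" and \<eta> :: "nat \<Rightarrow> 'a \<Rightarrow> real"
  assumes T: "1 \<le> T"
    and filt: "filtered_prob_space M F T"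
    and R: "dyn_risk_measure M F p T R"
    and U: "dyn_utility M F p T U"
    and eta_meas: "\<And>t. t < T \<Longrightarrow> \<eta> t \<in> borel_measurable (F t)"
    and eta_pos: "\<And>t. t < T \<Longrightarrow> AE x in M. 0 < \<eta> t x"
  shows
    "(\<forall>t<T.
        (\<forall>Y\<in>Lp M (F (Suc t)) p. Wmap R U \<eta> t Y \<in> Lp M (F t) p) \<and>
        (\<forall>Y\<in>Lp M (F (Suc t)) p. \<forall>l\<in>Lp M (F t) p.
           AE x in M. Wmap R U \<eta> t (\<lambda>\<omega>. Y \<omega> + l \<omega>) x = Wmap R U \<eta> t Y x + l x) \<and>
        (\<forall>Y\<in>Lp M (F (Suc t)) p. \<forall>Y'\<in>Lp M (F (Suc t)) p.
           (AE x in M. Y x \<le> Y' x) \<longrightarrow> (AE x in M. Wmap R U \<eta> t Y x \<le> Wmap R U \<eta> t Y' x)) \<and>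
        (\<forall>c\<in>Lp_plus M (F t) p. \<forall>Y\<in>Lp M (F (Suc t)) p.
           (\<lambda>\<omega>. c \<omega> * Y \<omega>) \<in> Lp M (F (Suc t)) p \<longrightarrow>
           (AE x in M. Wmap R U \<eta> t (\<lambda>\<omega>. c \<omega> * Y \<omega>) x = c x * Wmap R U \<eta> t Y x)))
     \<and>
     (\<forall>X :: nat \<Rightarrow> 'a \<Rightarrow> real. (\<forall>s\<in>{1..T}. X s \<in> Lp M (F s) p) \<longrightarrow>
        (\<forall>t<T. AE x in M. Vval R U \<eta> T X t x =
            foldr (Wmap R U \<eta>) [t..<T] (\<lambda>\<omega>. \<Sum>s\<in>{Suc t..T}. X s \<omega>) x))"
proof -
  interpret setting M F T p R U \<eta>
    using filt R U eta_meas eta_pos by unfold_locales auto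
  show ?thesis
  proof (intro conjI allI impI ballI)
    fix t assume t: "t < T"
    { fix Y assume "Y \<in> Lp M (F (Suc t)) p" then show "Wmap R U \<eta> t Y \<in> Lp M (F t) p" using W_Lp t by blast }
    { fix Y l assume "Y \<in> Lp M (F (Suc t)) p" "l \<in> Lp M (F t) p"
      then show "AE x in M. Wmap R U \<eta> t (\<lambda>\<omega>. Y \<omega> + l \<omega>) x = Wmap R U \<eta> t Y x + l x" using W_trans t by blast }
    { fix Y Y' assume "Y \<in> Lp M (F (Suc t)) p" "Y' \<in> Lp M (F (Suc t)) p" "AE x in M. Y x \<le> Y' x"
      then show "AE x in M. Wmap R U \<eta> t Y x \<le> Wmap R U \<eta> t Y' x" using W_mono t by blast }
    { fix c Y assume "c \<in> Lp_plus M (F t) p" "Y \<in> Lp M (F (Suc t)) p" "(\<lambda>\<omega>. c \<omega> * Y \<omega>) \<in> Lp M (F (Suc t)) p"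
      then show "AE x in M. Wmap R U \<eta> t (\<lambda>\<omega>. c \<omega> * Y \<omega>) x = c x * Wmap R U \<eta> t Y x" using W_hom t by blast }
  next
    fix X :: "nat \<Rightarrow> 'a \<Rightarrow> real" and t
    assume "\<forall>s\<in>{1..T}. X s \<in> Lp M (F s) p" "t < T"
    then show "AE x in M. Vval R U \<eta> T X t x = foldr (Wmap R U \<eta>) [t..<T] (\<lambda>\<omega>. \<Sum>s\<in>{Suc t..T}. X s \<omega>) x"
      using partii[of X t] by (simp add: G_def)
  qed
qed

end
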